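(* Let $X$ be the random variable with $\Pr\{X=n\}=q^{n^{2}}/\theta_{3}(q)$, $n\in\mathbb{Z}$, and let $\kappa_{n}$ be its cumulants. Then $\kappa_{2n+1}=0$ for all $n\ge0$, and for all $n\ge1$ \[ \kappa_{2n}=\sum_{m\ge1}\frac{(-1)^{m-1}m^{2n-1}}{\sinh(c m\pi)}, \] where $c=K(k')/K(k)$.
   Context: For $k\in(0,1)$, $k'=\sqrt{1-k^{2}}$, $K(k)=\int_{0}^{1}\frac{dt}{\sqrt{1-t^{2}}\sqrt{1-k^{2}t^{2}}}$, $q=e^{-\pi K(k')/K(k)}=e^{-\pi c}$ and $\theta_{3}(q)=\sum_{p\in\mathbb{Z}}q^{p^{2}}$. The cumulants $\kappa_{n}$ are defined by $\log\mathbb{E}e^{uX}=\sum_{n\ge1}\kappa_{n}\frac{u^{n}}{n!}$. *)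

theory Defs
  imports "HOL-Analysis.Analysis"
begin

definition ellK :: "real \<Rightarrow> real" where
  "ellK k = integral {0..1} (\<lambda>t. 1 / (sqrt (1 - t\<^sup>2) * sqrt (1 - k\<^sup>2 * t\<^sup>2)))"

definition theta3 :: "real \<Rightarrow> real" where
  "theta3 q = (\<Sum>\<^sub>\<infinity>p\<in>(UNIV::int set). q ^ nat (p\<^sup>2))"

definition theta_pmf :: "real \<Rightarrow> int \<Rightarrow> real" where
  "theta_pmf q n = q ^ nat (n\<^sup>2) / theta3 q"

definition theta_mgf :: "real \<Rightarrow> real \<Rightarrow> real" where
  "theta_mgf q u = (\<Sum>\<^sub>\<infinity>n\<in>(UNIV::int set). theta_pmf q n * exp (u * of_int n))"

definition theta_cumulant :: "real \<Rightarrow> nat \<Rightarrow> real" where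
  "theta_cumulant q n = (deriv ^^ n) (\<lambda>u. ln (theta_mgf q u)) 0"

end

theory Submission
  imports Defs
begin


lemma int_split_UNIV: "(UNIV::int set) = range int \<union> range (\<lambda>n. - int (Suc n))"
proof -
  have "j \<in> range int \<union> range (\<lambda>n. - int (Suc n))" for j :: int
  proof (cases "j \<ge> 0")
    case True then show ?thesis by (metis UnI1 nonneg_int_cases rangeI)
  next
    case False
    then have "j = - int (Suc (nat (-j - 1)))" by simp
    then show ?thesis by blast
  qed
  then show ?thesis by blast
qed

lemma int_split_disj: "range int \<inter> range (\<lambda>n. - int (Suc n)) = {}"
  by auto

lemma int_sums:
  fixes g :: "int \<Rightarrow> real"
  assumes "g summable_on UNIV"
  shows "(\<lambda>n. g (int n) + g (- int (Suc n))) sums (infsum g UNIV)"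
proof -
  have s1: "g summable_on range int"
    using assms summable_on_subset_banach by blast
  have s2: "g summable_on range (\<lambda>n. - int (Suc n))"
    using assms summable_on_subset_banach by blast
  have h1: "(g has_sum infsum g (range int)) (range int)" using s1 by (simp add: has_sum_infsum)
  have h2: "(g has_sum infsum g (range (\<lambda>n. - int (Suc n)))) (range (\<lambda>n. - int (Suc n)))"
    using s2 by (simp add: has_sum_infsum)
  have "(g has_sum (infsum g (range int) + infsum g (range (\<lambda>n. - int (Suc n))))) UNIV"
    using has_sum_Un_disjoint[OF h1 h2 int_split_disj] int_split_UNIV by simp
  then have eq: "infsum g UNIV = infsum g (range int) + infsum g (range (\<lambda>n. - int (Suc n)))"
    using infsumI by blast
  have "((g \<circ> int) has_sum infsum g (range int)) UNIV"
    using h1 has_sum_reindex[of int UNIV g] by simp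
  then have a: "(\<lambda>n. g (int n)) sums infsum g (range int)"
    using has_sum_imp_sums by (simp add: o_def)
  have inj: "inj (\<lambda>n. - int (Suc n))" by (auto simp: inj_def)
  have "((g \<circ> (\<lambda>n. - int (Suc n))) has_sum infsum g (range (\<lambda>n. - int (Suc n)))) UNIV"
    using h2 has_sum_reindex[OF inj, of g] by simp
  then have b: "(\<lambda>n. g (- int (Suc n))) sums infsum g (range (\<lambda>n. - int (Suc n)))"
    using has_sum_imp_sums by (simp add: o_def)
  show ?thesis using sums_add[OF a b] eq by simp
qed

lemma summable_int_exp:
  fixes \<epsilon> :: real
  assumes "\<epsilon> > 0"
  shows "(\<lambda>j::int. exp (- \<epsilon> * \<bar>of_int j\<bar>)) summable_on UNIV"
proof -
  let ?f = "\<lambda>j::int. exp (- \<epsilon> * \<bar>of_int j\<bar>)"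
  have geo: "summable (\<lambda>n::nat. exp (- \<epsilon>) ^ n)"
    using assms by (intro summable_geometric) simp
  have "summable (\<lambda>n::nat. ?f (int n))"
    using geo by (simp add: exp_of_nat_mult[symmetric] mult.commute)
  then have "(?f \<circ> int) summable_on UNIV"
    by (subst summable_on_UNIV_nonneg_real_iff) (auto simp: o_def)
  then have A: "?f summable_on range int"
    using summable_on_reindex[of int UNIV ?f] by simp
  have "summable (\<lambda>n::nat. exp (- \<epsilon>) * exp (- \<epsilon>) ^ n)"
    using geo by (rule summable_mult)
  then have "summable (\<lambda>n::nat. ?f (- int (Suc n)))"
    by (simp add: exp_of_nat_mult[symmetric] mult.commute exp_add[symmetric] algebra_simps)
  then have "(?f \<circ> (\<lambda>n. - int (Suc n))) summable_on UNIV"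
    by (subst summable_on_UNIV_nonneg_real_iff) (auto simp: o_def)
  then have B: "?f summable_on range (\<lambda>n. - int (Suc n))"
    using summable_on_reindex[of "\<lambda>n. - int (Suc n)" UNIV ?f] by (simp add: inj_def)
  show ?thesis using summable_on_Un_disjoint[OF A B int_split_disj] int_split_UNIV by simp
qed

lemma summable_int_bound:
  fixes g :: "int \<Rightarrow> real" and \<epsilon> C :: real
  assumes "\<epsilon> > 0" "\<And>j. \<bar>g j\<bar> \<le> C * exp (- \<epsilon> * \<bar>of_int j\<bar>)"
  shows "g summable_on UNIV"
proof -
  have "(\<lambda>j. C * exp (- \<epsilon> * \<bar>of_int j\<bar>)) summable_on UNIV"
    using summable_int_exp[OF assms(1)] by (rule summable_on_cmult_right)
  then have "(\<lambda>j. norm (g j)) summable_on UNIV"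
    using Infinite_Sum.abs_summable_on_comparison_test'[of "\<lambda>j. C * exp (- \<epsilon> * \<bar>of_int j\<bar>)" UNIV g] assms by simp
  then show ?thesis using summable_on_iff_abs_summable_on_real by blast
qed



definition Ec :: "(int \<Rightarrow> real) \<Rightarrow> real \<Rightarrow> real" where
  "Ec c u = (\<Sum>\<^sub>\<infinity>j. c j * exp (of_int j * u))"

definition Good :: "real \<Rightarrow> (int \<Rightarrow> real) \<Rightarrow> bool" where
  "Good \<delta> c \<longleftrightarrow> (\<forall>\<rho>. 0 \<le> \<rho> \<and> \<rho> < \<delta> \<longrightarrow> (\<lambda>j. \<bar>c j\<bar> * exp (\<rho> * \<bar>of_int j\<bar>)) summable_on UNIV)"

lemma summable_abs_real:
  fixes g h :: "int \<Rightarrow> real"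
  assumes "h summable_on UNIV" "\<And>j. \<bar>g j\<bar> \<le> h j"
  shows "g summable_on UNIV"
proof -
  have "(\<lambda>j. norm (g j)) summable_on UNIV"
    using Infinite_Sum.abs_summable_on_comparison_test'[of h UNIV g] assms by simp
  then show ?thesis using summable_on_iff_abs_summable_on_real by blast
qed

lemma Good_summable:
  assumes "Good \<delta> c" "\<bar>u\<bar> < \<delta>"
  shows "(\<lambda>j. c j * exp (of_int j * u)) summable_on UNIV"
proof (rule summable_abs_real)
  show "(\<lambda>j. \<bar>c j\<bar> * exp (\<bar>u\<bar> * \<bar>of_int j\<bar>)) summable_on UNIV"
    using assms unfolding Good_def by auto
  fix j :: int
  have "of_int j * u \<le> \<bar>u\<bar> * \<bar>of_int j\<bar>"
    by (metis abs_ge_self abs_mult mult.commute)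
  then show "\<bar>c j * exp (of_int j * u)\<bar> \<le> \<bar>c j\<bar> * exp (\<bar>u\<bar> * \<bar>of_int j\<bar>)"
    by (simp add: abs_mult mult_left_mono)
qed

lemma abs_le_exp_div:
  fixes t x :: real
  assumes "t > 0"
  shows "\<bar>x\<bar> \<le> exp (t * \<bar>x\<bar>) / t"
proof -
  have "t * \<bar>x\<bar> \<le> exp (t * \<bar>x\<bar>)"
    using exp_ge_add_one_self[of "t * \<bar>x\<bar>"] by linarith
  then show ?thesis using assms by (simp add: field_simps)
qed

lemma Good_mult:
  assumes "Good \<delta> c"
  shows "Good \<delta> (\<lambda>j. of_int j * c j)"
  unfolding Good_def
proof (intro allI impI)
  fix \<rho> :: real assume r: "0 \<le> \<rho> \<and> \<rho> < \<delta>"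
  define t where "t = (\<delta> - \<rho>) / 2"
  have t: "t > 0" using r by (simp add: t_def)
  have "0 \<le> \<rho> + t \<and> \<rho> + t < \<delta>" using r t unfolding t_def by (auto simp: field_simps)
  then have "(\<lambda>j. \<bar>c j\<bar> * exp ((\<rho> + t) * \<bar>of_int j\<bar>)) summable_on UNIV"
    using assms unfolding Good_def by blast
  then have S: "(\<lambda>j. (1/t) * (\<bar>c j\<bar> * exp ((\<rho> + t) * \<bar>of_int j\<bar>))) summable_on UNIV"
    by (rule summable_on_cmult_right)
  show "(\<lambda>j. \<bar>of_int j * c j\<bar> * exp (\<rho> * \<bar>of_int j\<bar>)) summable_on UNIV"
  proof (rule summable_abs_real[OF S])
    fix j :: int
    have e: "exp ((\<rho> + t) * \<bar>of_int j\<bar>) = exp (t * \<bar>of_int j\<bar>) * exp (\<rho> * \<bar>of_int j\<bar>)"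
      by (simp add: exp_add[symmetric] algebra_simps)
    have "\<bar>of_int j :: real\<bar> \<le> exp (t * \<bar>of_int j\<bar>) / t" by (rule abs_le_exp_div[OF t])
    then have "\<bar>of_int j :: real\<bar> * (\<bar>c j\<bar> * exp (\<rho> * \<bar>of_int j\<bar>)) \<le> exp (t * \<bar>of_int j\<bar>) / t * (\<bar>c j\<bar> * exp (\<rho> * \<bar>of_int j\<bar>))"
      by (rule mult_right_mono) simp
    then show "\<bar>\<bar>of_int j * c j\<bar> * exp (\<rho> * \<bar>of_int j\<bar>)\<bar> \<le> 1 / t * (\<bar>c j\<bar> * exp ((\<rho> + t) * \<bar>of_int j\<bar>))"
      unfolding e by (simp add: abs_mult field_simps)
  qed
qed

lemma Ec_sums:
  assumes "Good \<delta> c" "\<bar>u\<bar> < \<delta>"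
  shows "(\<lambda>n. c (int n) * exp (of_int (int n) * u) + c (- int (Suc n)) * exp (of_int (- int (Suc n)) * u)) sums Ec c u"
  unfolding Ec_def using int_sums[OF Good_summable[OF assms]] by simp

lemma Ec_deriv:
  assumes G: "Good \<delta> c" and u: "\<bar>u\<bar> < \<delta>"
  shows "(Ec c has_real_derivative Ec (\<lambda>j. of_int j * c j) u) (at u)"
proof -
  define \<rho> where "\<rho> = (\<bar>u\<bar> + \<delta>) / 2"
  have \<rho>: "\<bar>u\<bar> < \<rho>" "\<rho> < \<delta>" "0 \<le> \<rho>" using u by (auto simp: \<rho>_def)
  define f where "f = (\<lambda>n x. c (int n) * exp (of_int (int n) * x) + c (- int (Suc n)) * exp (of_int (- int (Suc n)) * x))"
  define c' where "c' = (\<lambda>j. of_int j * c j)"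
  have G': "Good \<delta> c'" unfolding c'_def by (rule Good_mult[OF G])
  define f' where "f' = (\<lambda>n x. c' (int n) * exp (of_int (int n) * x) + c' (- int (Suc n)) * exp (of_int (- int (Suc n)) * x))"
  have df: "(f n has_field_derivative f' n x) (at x within cball 0 \<rho>)" for n x
    unfolding f_def f'_def c'_def
    by (rule derivative_eq_intros refl | simp)+
  define M where "M = (\<lambda>n. \<bar>c' (int n)\<bar> * exp (\<rho> * \<bar>of_int (int n)\<bar>) + \<bar>c' (- int (Suc n))\<bar> * exp (\<rho> * \<bar>of_int (- int (Suc n))\<bar>))"
  have "(\<lambda>j. \<bar>c' j\<bar> * exp (\<rho> * \<bar>of_int j\<bar>)) summable_on UNIV"
    using G' \<rho> unfolding Good_def by auto
  from int_sums[OF this] have sM: "summable M" unfolding M_def by (simp add: sums_summable)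
  have bound: "norm (f' n x) \<le> M n" if "x \<in> cball 0 \<rho>" for n x
  proof -
    have x: "\<bar>x\<bar> \<le> \<rho>" using that by auto
    have e1: "exp (of_int (int n) * x) \<le> exp (\<rho> * \<bar>of_int (int n)\<bar>)"
      using x mult_right_mono[of x \<rho> "real n"] by (simp add: mult.commute)
    have e2: "exp (of_int (- int (Suc n)) * x) \<le> exp (\<rho> * \<bar>of_int (- int (Suc n))\<bar>)"
    proof -
      have "- (real (Suc n) * x) \<le> real (Suc n) * \<rho>"
        using x mult_left_mono[of "-x" \<rho> "real (Suc n)"] by simp
      then show ?thesis by (simp add: algebra_simps)
    qed
    have "norm (f' n x) \<le> \<bar>c' (int n)\<bar> * exp (of_int (int n) * x) + \<bar>c' (- int (Suc n))\<bar> * exp (of_int (- int (Suc n)) * x)"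
      unfolding f'_def by (simp add: abs_mult abs_triangle_ineq[THEN order_trans])
    also have "\<dots> \<le> M n" unfolding M_def
      by (intro add_mono mult_left_mono e1 e2) auto
    finally show ?thesis .
  qed
  have uc: "uniformly_convergent_on (cball 0 \<rho>) (\<lambda>n x. \<Sum>i<n. f' i x)"
    by (rule Weierstrass_m_test'[OF bound sM])
  have s0: "summable (\<lambda>n. f n 0)"
    using Ec_sums[OF G, of 0] \<rho> unfolding f_def by (auto intro: sums_summable)
  have uin: "u \<in> interior (cball 0 \<rho>)" using \<rho> by simp
  have D: "((\<lambda>x. \<Sum>n. f n x) has_field_derivative (\<Sum>n. f' n u)) (at u)"
    using has_field_derivative_series'(2)[OF convex_cball df uc _ s0 uin] \<rho> by simp
  have eq1: "(\<Sum>n. f' n u) = Ec c' u"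
    using Ec_sums[OF G' u] unfolding f'_def by (simp add: sums_iff)
  have eq2: "(\<Sum>n. f n x) = Ec c x" if "x \<in> ball 0 \<delta>" for x
    using Ec_sums[OF G, of x] that unfolding f_def by (simp add: sums_iff)
  have "(Ec c has_field_derivative (\<Sum>n. f' n u)) (at u)"
    by (rule has_field_derivative_transform_within_open[OF D, of "ball 0 \<delta>"]) (use u eq2 in auto)
  then show ?thesis using eq1 unfolding c'_def by simp
qed



definition sg :: "int \<Rightarrow> real" where "sg j = (-1) ^ nat \<bar>j\<bar>"

lemma sg_alt: "sg j = (if even j then 1 else -1)"
  unfolding sg_def minus_one_power_iff by (simp add: even_nat_iff)

lemma sg_minus [simp]: "sg (- j) = sg j"
  by (simp add: sg_alt)

lemma sg_refl: "sg (2 * N + 1 - j) = - sg j"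
  by (simp add: sg_alt)

lemma abs_sg [simp]: "\<bar>sg j\<bar> = 1"
  by (simp add: sg_alt)

definition ss :: "real \<Rightarrow> int \<Rightarrow> real" where
  "ss \<delta> j = - sg j / (2 * sinh (\<delta> * of_int j))"

lemma ss_0 [simp]: "ss \<delta> 0 = 0" by (simp add: ss_def)

lemma ss_minus: "ss \<delta> (- j) = - ss \<delta> j"
  by (simp add: ss_def)

lemma inv_sinh_bound:
  fixes \<delta> x :: real
  assumes "\<delta> > 0" "x \<ge> \<delta>"
  shows "1 / (2 * sinh x) \<le> exp (- x) / (1 - exp (- 2 * \<delta>))"
proof -
  have e1: "exp (- 2 * x) \<le> exp (- 2 * \<delta>)" using assms by simp
  have e2: "exp (- 2 * \<delta>) < 1" using assms by simp
  have ex: "exp x - exp (- x) > 0" using assms by simp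
  have m: "exp (- x) * (exp x - exp (- x)) = 1 - exp (- 2 * x)"
    by (simp add: right_diff_distrib exp_add[symmetric] exp_minus_inverse)
  have s: "2 * sinh x = exp x - exp (- x)" by (simp add: sinh_def)
  have "1 - exp (- 2 * \<delta>) \<le> exp (- x) * (exp x - exp (- x))" using m e1 by simp
  then show ?thesis unfolding s using ex e2 by (simp add: field_simps)
qed

definition KK :: "real \<Rightarrow> real" where "KK \<delta> = 1 / (1 - exp (- 2 * \<delta>))"

lemma KK_pos: "\<delta> > 0 \<Longrightarrow> KK \<delta> > 0"
  unfolding KK_def by simp

lemma ss_bound:
  assumes "\<delta> > 0"
  shows "\<bar>ss \<delta> j\<bar> \<le> KK \<delta> * exp (- \<delta> * \<bar>of_int j\<bar>)"
proof (cases "j = 0")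
  case True then show ?thesis using KK_pos[OF assms] by simp
next
  case False
  then have j1: "\<bar>of_int j :: real\<bar> \<ge> 1" by linarith
  have x: "\<delta> * \<bar>of_int j\<bar> \<ge> \<delta>" using j1 assms by (simp add: mult_le_cancel_left1)
  have sa: "sinh (\<delta> * \<bar>of_int j\<bar>) = \<bar>sinh (\<delta> * of_int j)\<bar>"
    using sinh_real_abs[of "\<delta> * of_int j"] assms by (simp add: abs_mult)
  have "\<bar>ss \<delta> j\<bar> = 1 / (2 * sinh (\<delta> * \<bar>of_int j\<bar>))"
    unfolding sa by (simp add: ss_def abs_mult abs_divide)
  also have "\<dots> \<le> exp (- (\<delta> * \<bar>of_int j\<bar>)) / (1 - exp (- 2 * \<delta>))"
    by (rule inv_sinh_bound[OF assms x])
  finally show ?thesis by (simp add: KK_def)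
qed

lemma Good_bound:
  fixes c :: "int \<Rightarrow> real"
  assumes "\<And>j. \<bar>c j\<bar> \<le> C * exp (- \<delta> * \<bar>of_int j\<bar>)"
  shows "Good \<delta> c"
  unfolding Good_def
proof (intro allI impI)
  fix \<rho> :: real assume r: "0 \<le> \<rho> \<and> \<rho> < \<delta>"
  show "(\<lambda>j. \<bar>c j\<bar> * exp (\<rho> * \<bar>of_int j\<bar>)) summable_on UNIV"
  proof (rule summable_int_bound[of "\<delta> - \<rho>" _ C])
    show "\<delta> - \<rho> > 0" using r by simp
    fix j :: int
    have "\<bar>c j\<bar> * exp (\<rho> * \<bar>of_int j\<bar>) \<le> C * exp (- \<delta> * \<bar>of_int j\<bar>) * exp (\<rho> * \<bar>of_int j\<bar>)"
      by (rule mult_right_mono[OF assms]) simp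
    also have "\<dots> = C * exp (- (\<delta> - \<rho>) * \<bar>of_int j\<bar>)"
      by (simp add: mult.assoc exp_add[symmetric] algebra_simps)
    finally show "\<bar>\<bar>c j\<bar> * exp (\<rho> * \<bar>of_int j\<bar>)\<bar> \<le> C * exp (- (\<delta> - \<rho>) * \<bar>of_int j\<bar>)"
      by simp
  qed
qed

lemma Good_ss: "\<delta> > 0 \<Longrightarrow> Good \<delta> (ss \<delta>)"
  by (rule Good_bound[OF ss_bound])

lemma Good_hh: "\<delta> > 0 \<Longrightarrow> Good \<delta> (\<lambda>j. ss \<delta> j / of_int j)"
proof (rule Good_bound)
  fix j :: int assume d: "\<delta> > 0"
  have "\<bar>ss \<delta> j / of_int j\<bar> \<le> \<bar>ss \<delta> j\<bar>"
  proof (cases "j = 0")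
    case False
    then have "1 \<le> \<bar>j\<bar>" by linarith
    then have "(1::real) \<le> \<bar>of_int j\<bar>" by (metis of_int_1_le_iff of_int_abs)
    then have "\<bar>ss \<delta> j\<bar> * 1 \<le> \<bar>ss \<delta> j\<bar> * \<bar>of_int j\<bar>" by (intro mult_left_mono) auto
    then show ?thesis using False by (simp add: abs_divide divide_le_eq)
  qed simp
  then show "\<bar>ss \<delta> j / of_int j\<bar> \<le> KK \<delta> * exp (- \<delta> * \<bar>of_int j\<bar>)"
    using ss_bound[OF d, of j] by linarith
qed

definition th :: "real \<Rightarrow> int \<Rightarrow> real" where "th \<delta> j = exp (- \<delta> * of_int j ^ 2)"

lemma Good_th: "\<delta> > 0 \<Longrightarrow> Good \<delta> (th \<delta>)"
proof (rule Good_bound[of _ 1])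
  fix j :: int assume d: "\<delta> > 0"
  have "\<bar>of_int j :: real\<bar> \<le> of_int j ^ 2"
  proof (cases "j = 0")
    case False
    then have "1 \<le> \<bar>j\<bar>" by linarith
    then have "(1::real) \<le> \<bar>of_int j\<bar>" by (metis of_int_1_le_iff of_int_abs)
    then have "\<bar>of_int j :: real\<bar> * 1 \<le> \<bar>of_int j\<bar> * \<bar>of_int j\<bar>" by (intro mult_left_mono) auto
    then show ?thesis by (simp add: power2_eq_square abs_mult[symmetric])
  qed simp
  then have "- \<delta> * of_int j ^ 2 \<le> - \<delta> * \<bar>of_int j\<bar>" using d by simp
  then show "\<bar>th \<delta> j\<bar> \<le> 1 * exp (- \<delta> * \<bar>of_int j\<bar>)" by (simp add: th_def)
qed



definition AA :: "real \<Rightarrow> int \<Rightarrow> real" where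
  "AA \<delta> N = (\<Sum>\<^sub>\<infinity>j. ss \<delta> j * exp (- \<delta> * (of_int N - of_int j)\<^sup>2))"

lemma sum_AA:
  assumes d: "\<delta> > 0"
  shows "(\<lambda>j. ss \<delta> j * exp (- \<delta> * (of_int N - of_int j)\<^sup>2)) summable_on UNIV"
proof (rule summable_int_bound[OF d, of _ "KK \<delta>"])
  fix j :: int
  have "exp (- \<delta> * (of_int N - of_int j)\<^sup>2) \<le> 1" using d by simp
  then have "\<bar>ss \<delta> j\<bar> * exp (- \<delta> * (of_int N - of_int j)\<^sup>2) \<le> \<bar>ss \<delta> j\<bar> * 1"
    by (intro mult_left_mono) auto
  then show "\<bar>ss \<delta> j * exp (- \<delta> * (of_int N - of_int j)\<^sup>2)\<bar> \<le> KK \<delta> * exp (- \<delta> * \<bar>of_int j\<bar>)"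
    using ss_bound[OF d, of j] by (simp add: abs_mult)
qed

lemma sq_ge: "(x::real)\<^sup>2 \<ge> 2 * \<bar>x\<bar> - 1"
proof -
  have "0 \<le> (\<bar>x\<bar> - 1)\<^sup>2" by simp
  then show ?thesis by (simp add: power2_eq_square algebra_simps abs_mult_self_eq)
qed

lemma aux: fixes s n j x :: real assumes "2*\<bar>x\<bar> - 1 \<le> s" "j - n \<le> \<bar>x\<bar>" "n \<le> \<bar>n\<bar>" "-n \<le> \<bar>n\<bar>" "0 \<le> \<bar>x\<bar>"
 shows "j - s \<le> \<bar>n\<bar> + n + 1 - \<bar>j\<bar>"
proof (cases "j \<ge> 0")
  case True then have "\<bar>j\<bar> = j" by simp
  then show ?thesis using assms by linarith
next
  case False then have "\<bar>j\<bar> = - j" by simp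
  then show ?thesis using assms by linarith
qed

lemma sum_T:
  assumes d: "\<delta> > 0"
  shows "(\<lambda>j. sg j * exp (\<delta> * of_int j - \<delta> * (of_int N - of_int j)\<^sup>2)) summable_on UNIV"
proof (rule summable_int_bound[OF d, of _ "exp (\<delta> * (\<bar>of_int N\<bar> + of_int N + 1))"])
  fix j :: int
  let ?n = "of_int N :: real" and ?j = "of_int j :: real"
  have q: "(?n - ?j)\<^sup>2 \<ge> 2 * \<bar>?n - ?j\<bar> - 1" by (rule sq_ge)
  have "?j - (?n - ?j)\<^sup>2 \<le> (\<bar>?n\<bar> + ?n + 1) - \<bar>?j\<bar>"
    by (rule aux[OF q]) (use abs_ge_minus_self[of "?n - ?j"] in simp_all)
  then have "\<delta> * (?j - (?n - ?j)\<^sup>2) \<le> \<delta> * ((\<bar>?n\<bar> + ?n + 1) - \<bar>?j\<bar>)"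
    using d by (intro mult_left_mono) auto
  then have "\<delta> * ?j - \<delta> * (?n - ?j)\<^sup>2 \<le> \<delta> * (\<bar>?n\<bar> + ?n + 1) + - \<delta> * \<bar>?j\<bar>"
    by (simp add: algebra_simps)
  then have "exp (\<delta> * ?j - \<delta> * (?n - ?j)\<^sup>2) \<le> exp (\<delta> * (\<bar>?n\<bar> + ?n + 1) + - \<delta> * \<bar>?j\<bar>)"
    by (subst exp_le_cancel_iff)
  also have "\<dots> = exp (\<delta> * (\<bar>?n\<bar> + ?n + 1)) * exp (- \<delta> * \<bar>?j\<bar>)" by (rule exp_add)
  finally show "\<bar>sg j * exp (\<delta> * ?j - \<delta> * (?n - ?j)\<^sup>2)\<bar> \<le> exp (\<delta> * (\<bar>?n\<bar> + ?n + 1)) * exp (- \<delta> * \<bar>?j\<bar>)"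
    by (simp add: abs_mult)
qed

lemma T_zero:
  assumes d: "\<delta> > 0"
  shows "(\<Sum>\<^sub>\<infinity>j. sg j * exp (\<delta> * of_int j - \<delta> * (of_int N - of_int j)\<^sup>2)) = 0"
proof -
  let ?g = "\<lambda>j. sg j * exp (\<delta> * of_int j - \<delta> * (of_int N - of_int j)\<^sup>2)"
  have "infsum ?g UNIV = infsum (\<lambda>b. - ?g b) UNIV"
  proof (rule infsum_reindex_bij_witness[of UNIV "\<lambda>a. 2 * N + 1 - a" "\<lambda>a. 2 * N + 1 - a"])
    fix a :: int
    have "\<delta> * of_int (2 * N + 1 - a) - \<delta> * (of_int N - of_int (2 * N + 1 - a))\<^sup>2 =
          \<delta> * of_int a - \<delta> * (of_int N - of_int a)\<^sup>2"
      by (simp add: power2_eq_square algebra_simps)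
    then show "- ?g (2 * N + 1 - a) = ?g a" by (simp add: sg_refl)
  qed auto
  also have "\<dots> = - infsum ?g UNIV" by (rule infsum_uminus)
  finally show ?thesis by simp
qed

lemma ss_key:
  assumes d: "\<delta> > 0"
  shows "ss \<delta> j * (exp (2 * \<delta> * of_int j) - 1) = - sg j * exp (\<delta> * of_int j) + (if j = 0 then 1 else 0)"
proof (cases "j = 0")
  case True then show ?thesis by (auto simp: ss_def sg_alt)
next
  case False
  let ?x = "\<delta> * of_int j"
  have x: "?x \<noteq> 0" using False d by simp
  have ne: "exp ?x - exp (- ?x) \<noteq> 0"
    using x sinh_real_zero_iff[of ?x] by (simp add: sinh_def)
  have ee: "exp (2 * \<delta> * of_int j) - 1 = exp ?x * (exp ?x - exp (- ?x))"
    by (simp add: right_diff_distrib exp_add[symmetric] exp_minus_inverse mult_2 algebra_simps)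
  have s2: "2 * sinh ?x = exp ?x - exp (- ?x)" by (simp add: sinh_def)
  have "ss \<delta> j * (exp (2 * \<delta> * of_int j) - 1) = - sg j / (exp ?x - exp (- ?x)) * (exp ?x * (exp ?x - exp (- ?x)))"
    unfolding ss_def s2 ee by simp
  also have "\<dots> = - sg j * exp ?x" using ne by simp
  finally show ?thesis using False by simp
qed

lemma AA_rec:
  assumes d: "\<delta> > 0"
  shows "AA \<delta> (N + 1) = exp (- \<delta> * (2 * of_int N + 1)) * AA \<delta> N + exp (- \<delta> * (of_int N + 1)\<^sup>2)"
proof -
  let ?n = "of_int N :: real"
  define a where "a = (\<lambda>j. ss \<delta> j * exp (- \<delta> * (?n - of_int j)\<^sup>2))"
  define b where "b = (\<lambda>j. - (sg j * exp (\<delta> * of_int j - \<delta> * (?n - of_int j)\<^sup>2)))"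
  define c where "c = (\<lambda>j::int. if j = 0 then exp (- \<delta> * ?n\<^sup>2) else 0)"
  have sa: "a summable_on UNIV" unfolding a_def by (rule sum_AA[OF d])
  have sb: "b summable_on UNIV" unfolding b_def using sum_T[OF d] by (subst summable_on_uminus)
  have hc: "(c has_sum exp (- \<delta> * ?n\<^sup>2)) UNIV"
    by (rule has_sum_finite_neutralI[of "{0}"]) (auto simp: c_def)
  have sc: "c summable_on UNIV" using hc by (rule has_sum_imp_summable)
  have ic: "infsum c UNIV = exp (- \<delta> * ?n\<^sup>2)" using hc by (rule infsumI)
  have ib: "infsum b UNIV = 0" unfolding b_def by (simp add: infsum_uminus T_zero[OF d])
  have pt: "ss \<delta> j * exp (- \<delta> * (of_int (N + 1) - of_int j)\<^sup>2) =
        exp (- \<delta> * (2 * ?n + 1)) * (a j + b j + c j)" for j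
  proof -
    let ?G = "exp (- \<delta> * (?n - of_int j)\<^sup>2)"
    have x: "- \<delta> * (of_int (N + 1) - of_int j)\<^sup>2 = - \<delta> * (2 * ?n + 1) + (2 * \<delta> * of_int j + - \<delta> * (?n - of_int j)\<^sup>2)"
      by (simp add: power2_eq_square algebra_simps)
    have e: "exp (- \<delta> * (of_int (N + 1) - of_int j)\<^sup>2) =
          exp (- \<delta> * (2 * ?n + 1)) * (exp (2 * \<delta> * of_int j) * ?G)"
      unfolding x exp_add by (rule refl)
    have e2: "exp (\<delta> * of_int j - \<delta> * (?n - of_int j)\<^sup>2) = exp (\<delta> * of_int j) * ?G"
      by (simp add: exp_add[symmetric])
    have k: "ss \<delta> j * exp (2 * \<delta> * of_int j) = ss \<delta> j + (- sg j * exp (\<delta> * of_int j) + (if j = 0 then 1 else 0))"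
      using ss_key[OF d, of j] by (simp add: algebra_simps)
    have "ss \<delta> j * (exp (2 * \<delta> * of_int j) * ?G) = (ss \<delta> j * exp (2 * \<delta> * of_int j)) * ?G"
      by (rule mult.assoc[symmetric])
    also have "\<dots> = ss \<delta> j * ?G + - (sg j * (exp (\<delta> * of_int j) * ?G)) + (if j = 0 then 1 else 0) * ?G"
      unfolding k by (simp only: distrib_right mult_minus_left mult.assoc)
    also have "\<dots> = a j + b j + c j"
      unfolding a_def b_def c_def e2 by (cases "j = 0") simp_all
    finally have F: "ss \<delta> j * (exp (2 * \<delta> * of_int j) * ?G) = a j + b j + c j" .
    have "ss \<delta> j * exp (- \<delta> * (of_int (N + 1) - of_int j)\<^sup>2) = exp (- \<delta> * (2 * ?n + 1)) * (ss \<delta> j * (exp (2 * \<delta> * of_int j) * ?G))"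
      unfolding e by (simp only: mult_ac)
    then show ?thesis unfolding F .
  qed
  have ia: "infsum a UNIV = AA \<delta> N" by (simp add: a_def AA_def)
  have ee: "exp (- \<delta> * (2 * ?n + 1)) * exp (- \<delta> * ?n\<^sup>2) = exp (- \<delta> * (?n + 1)\<^sup>2)"
  proof -
    have "- \<delta> * (2 * ?n + 1) + - \<delta> * ?n\<^sup>2 = - \<delta> * (?n + 1)\<^sup>2"
      by (simp add: power2_eq_square algebra_simps)
    then show ?thesis by (simp only: exp_add[symmetric])
  qed
  have "AA \<delta> (N + 1) = (\<Sum>\<^sub>\<infinity>j. exp (- \<delta> * (2 * ?n + 1)) * (a j + b j + c j))"
    unfolding AA_def by (simp only: pt)
  also have "\<dots> = exp (- \<delta> * (2 * ?n + 1)) * (infsum a UNIV + infsum b UNIV + infsum c UNIV)"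
    by (simp add: infsum_cmult_right' infsum_add sa sb sc summable_on_add)
  also have "\<dots> = exp (- \<delta> * (2 * ?n + 1)) * AA \<delta> N + exp (- \<delta> * (?n + 1)\<^sup>2)"
    unfolding ia ib ic ee[symmetric] by (simp add: distrib_left)
  finally show ?thesis .
qed

lemma AA_0:
  assumes d: "\<delta> > 0"
  shows "AA \<delta> 0 = 0"
proof -
  let ?g = "\<lambda>j. ss \<delta> j * exp (- \<delta> * (of_int 0 - of_int j)\<^sup>2)"
  have "AA \<delta> 0 = infsum (\<lambda>b. - ?g b) UNIV"
    unfolding AA_def
  proof (rule infsum_reindex_bij_witness[of UNIV uminus uminus])
    fix a :: int
    show "- ?g (- a) = ?g a" by (simp add: ss_minus)
  qed auto
  also have "\<dots> = - AA \<delta> 0" unfolding AA_def by (rule infsum_uminus)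
  finally show ?thesis by simp
qed

lemma AA_eq:
  assumes d: "\<delta> > 0"
  shows "AA \<delta> N = of_int N * exp (- \<delta> * (of_int N)\<^sup>2)"
proof (induction N rule: int_induct[where k = 0])
  case base then show ?case using AA_0[OF d] by simp
next
  case (step1 i)
  then show ?case using AA_rec[OF d, of i]
    by (simp add: algebra_simps exp_add[symmetric] power2_eq_square)
next
  case (step2 i)
  have r: "AA \<delta> i = exp (- \<delta> * (2 * of_int (i - 1) + 1)) * AA \<delta> (i - 1) + exp (- \<delta> * (of_int (i - 1) + 1)\<^sup>2)"
    using AA_rec[OF d, of "i - 1"] by simp
  let ?E = "exp (- \<delta> * (2 * of_int (i - 1) + 1))"
  have "AA \<delta> (i - 1) = (AA \<delta> i - exp (- \<delta> * (of_int i)\<^sup>2)) / ?E"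
    using r by (simp add: field_simps)
  also have "\<dots> = (of_int i - 1) * exp (- \<delta> * (of_int i)\<^sup>2) / ?E"
    using step2 by (simp add: algebra_simps)
  also have "\<dots> = of_int (i - 1) * exp (- \<delta> * (of_int (i - 1))\<^sup>2)"
  proof -
    have "exp (- \<delta> * (of_int i)\<^sup>2) = exp (- \<delta> * (of_int (i - 1))\<^sup>2) * ?E"
      by (simp add: exp_add[symmetric] power2_eq_square algebra_simps)
    then show ?thesis by simp
  qed
  finally show ?case .
qed



lemma Ec_summable:
  assumes "Good \<delta> c" "\<bar>u\<bar> < \<delta>"
  shows "(\<lambda>j. c j * exp (of_int j * u)) summable_on UNIV"
  using Good_summable[OF assms] .

lemma prod_identity:
  assumes d: "\<delta> > 0" and u: "\<bar>u\<bar> < \<delta>"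
  shows "Ec (th \<delta>) u * Ec (ss \<delta>) u = Ec (\<lambda>j. of_int j * th \<delta> j) u"
proof -
  define f where "f = (\<lambda>n. th \<delta> n * exp (of_int n * u))"
  define g where "g = (\<lambda>j. ss \<delta> j * exp (of_int j * u))"
  have sf: "f summable_on UNIV" unfolding f_def by (rule Ec_summable[OF Good_th[OF d] u])
  have sg': "g summable_on UNIV" unfolding g_def by (rule Ec_summable[OF Good_ss[OF d] u])
  have af: "(\<lambda>n. norm (f n)) summable_on UNIV" using sf summable_on_iff_abs_summable_on_real by blast
  have ag: "(\<lambda>n. norm (g n)) summable_on UNIV" using sg' summable_on_iff_abs_summable_on_real by blast
  define F where "F = (\<lambda>p::int \<times> int. f (fst p) * g (snd p))"
  have SU: "Sigma (UNIV::int set) (\<lambda>_. UNIV::int set) = UNIV" by simp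
  have aF: "(\<lambda>x. norm (F x)) summable_on Sigma UNIV (\<lambda>_. UNIV)"
  proof (subst Infinite_Sum.abs_summable_on_Sigma_iff, intro conjI ballI)
    fix x :: int
    show "(\<lambda>y. norm (F (x, y))) summable_on UNIV"
      unfolding F_def using summable_on_cmult_right[OF ag, of "norm (f x)"] by (simp add: abs_mult)
  next
    have "(\<lambda>x. norm (f x) * infsum (\<lambda>y. norm (g y)) UNIV) summable_on UNIV"
      using af by (rule summable_on_cmult_left)
    moreover have "infsum (\<lambda>y. norm (F (x, y))) UNIV = norm (f x) * infsum (\<lambda>y. norm (g y)) UNIV" for x
      unfolding F_def by (simp add: abs_mult infsum_cmult_right')
    ultimately show "(\<lambda>x. norm (infsum (\<lambda>y. norm (F (x, y))) UNIV)) summable_on UNIV"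
      by (simp add: infsum_nonneg)
  qed
  have sF: "F summable_on UNIV"
    using aF summable_on_iff_abs_summable_on_real unfolding SU by blast
  have "infsum F UNIV = (\<Sum>\<^sub>\<infinity>x. \<Sum>\<^sub>\<infinity>y. F (x, y))"
    using infsum_Sigma_banach[of F UNIV "\<lambda>_. UNIV"] sF unfolding SU by simp
  also have "\<dots> = (\<Sum>\<^sub>\<infinity>x. f x * infsum g UNIV)"
    unfolding F_def by (simp add: infsum_cmult_right')
  also have "\<dots> = infsum f UNIV * infsum g UNIV"
    by (simp add: infsum_cmult_left')
  finally have P1: "infsum F UNIV = Ec (th \<delta>) u * Ec (ss \<delta>) u"
    unfolding f_def g_def Ec_def .
  define F' where "F' = (\<lambda>p::int \<times> int. F (fst p - snd p, snd p))"
  have rF: "infsum F' UNIV = infsum F UNIV"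
    by (rule infsum_reindex_bij_witness[of UNIV "\<lambda>p. (fst p + snd p, snd p)" "\<lambda>p. (fst p - snd p, snd p)"])
       (simp_all add: F'_def)
  have sF': "F' summable_on UNIV"
    using sF summable_on_reindex_bij_witness[of UNIV "\<lambda>p. (fst p + snd p, snd p)" "\<lambda>p. (fst p - snd p, snd p)" UNIV F F']
    by (simp_all add: F'_def)
  have inner: "(\<Sum>\<^sub>\<infinity>j. F' (N, j)) = of_int N * th \<delta> N * exp (of_int N * u)" for N
  proof -
    have "F' (N, j) = exp (of_int N * u) * (ss \<delta> j * exp (- \<delta> * (of_int N - of_int j)\<^sup>2))" for j
    proof -
      have E: "exp (of_int (N - j) * u) * exp (of_int j * u) = exp (of_int N * u)"
        by (simp add: exp_add[symmetric] algebra_simps)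
      have T: "th \<delta> (N - j) = exp (- \<delta> * (of_int N - of_int j)\<^sup>2)" by (simp add: th_def)
      have "F' (N, j) = th \<delta> (N - j) * exp (of_int (N - j) * u) * (ss \<delta> j * exp (of_int j * u))"
        unfolding F'_def F_def f_def g_def by simp
      also have "\<dots> = th \<delta> (N - j) * ss \<delta> j * (exp (of_int (N - j) * u) * exp (of_int j * u))"
        by (simp only: mult_ac)
      also have "\<dots> = exp (- \<delta> * (of_int N - of_int j)\<^sup>2) * ss \<delta> j * exp (of_int N * u)"
        unfolding E T ..
      also have "\<dots> = exp (of_int N * u) * (ss \<delta> j * exp (- \<delta> * (of_int N - of_int j)\<^sup>2))"
        by (simp only: mult_ac)
      finally show ?thesis .
    qed
    then have "(\<Sum>\<^sub>\<infinity>j. F' (N, j)) = exp (of_int N * u) * AA \<delta> N"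
      unfolding AA_def by (simp add: infsum_cmult_right')
    then show ?thesis using AA_eq[OF d, of N] by (simp add: th_def)
  qed
  have "infsum F' UNIV = (\<Sum>\<^sub>\<infinity>x. \<Sum>\<^sub>\<infinity>y. F' (x, y))"
    using infsum_Sigma_banach[of F' UNIV "\<lambda>_. UNIV"] sF' unfolding SU by simp
  also have "\<dots> = Ec (\<lambda>j. of_int j * th \<delta> j) u"
    unfolding inner Ec_def by (simp add: mult.assoc)
  finally show ?thesis using P1 rF by simp
qed

lemma Ec_th_pos:
  assumes d: "\<delta> > 0" and u: "\<bar>u\<bar> < \<delta>"
  shows "Ec (th \<delta>) u > 0"
proof -
  let ?f = "\<lambda>j. th \<delta> j * exp (of_int j * u)"
  have s: "?f summable_on UNIV" by (rule Ec_summable[OF Good_th[OF d] u])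
  have "infsum ?f UNIV = infsum ?f ({0} \<union> (UNIV - {0}))" by simp
  also have "\<dots> = infsum ?f {0} + infsum ?f (UNIV - {0})"
    by (rule infsum_Un_disjoint) (auto intro: summable_on_subset_banach[OF s])
  also have "\<dots> \<ge> 1"
  proof -
    have "infsum ?f (UNIV - {0}) \<ge> 0" by (rule infsum_nonneg) (simp add: th_def)
    then show ?thesis by (simp add: th_def)
  qed
  finally show ?thesis unfolding Ec_def by simp
qed

lemma hh_mult: "(\<lambda>j. of_int j * (ss \<delta> j / of_int j)) = ss \<delta>"
  by (rule ext) (case_tac "j = 0"; simp)

lemma log_identity:
  assumes d: "\<delta> > 0" and u: "\<bar>u\<bar> < \<delta>"
  shows "ln (Ec (th \<delta>) u) - ln (Ec (th \<delta>) 0) = Ec (\<lambda>j. ss \<delta> j / of_int j) u - Ec (\<lambda>j. ss \<delta> j / of_int j) 0"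
proof -
  define L where "L = (\<lambda>v. ln (Ec (th \<delta>) v) - Ec (\<lambda>j. ss \<delta> j / of_int j) v)"
  have D: "(L has_real_derivative 0) (at v)" if v: "v \<in> ball 0 \<delta>" for v
  proof -
    have v': "\<bar>v\<bar> < \<delta>" using v by simp
    have pos: "Ec (th \<delta>) v > 0" by (rule Ec_th_pos[OF d v'])
    have d1: "(Ec (th \<delta>) has_real_derivative Ec (\<lambda>j. of_int j * th \<delta> j) v) (at v)"
      by (rule Ec_deriv[OF Good_th[OF d] v'])
    have d2: "(Ec (\<lambda>j. ss \<delta> j / of_int j) has_real_derivative Ec (ss \<delta>) v) (at v)"
      using Ec_deriv[OF Good_hh[OF d] v'] unfolding hh_mult .
    have "((\<lambda>v. ln (Ec (th \<delta>) v)) has_real_derivative (1 / Ec (th \<delta>) v * Ec (\<lambda>j. of_int j * th \<delta> j) v)) (at v)"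
      by (rule DERIV_chain2[OF DERIV_ln_divide[OF pos] d1])
    from DERIV_diff[OF this d2]
    have "(L has_real_derivative (Ec (\<lambda>j. of_int j * th \<delta> j) v / Ec (th \<delta>) v - Ec (ss \<delta>) v)) (at v)"
      unfolding L_def by simp
    moreover have "Ec (\<lambda>j. of_int j * th \<delta> j) v / Ec (th \<delta>) v - Ec (ss \<delta>) v = 0"
      using prod_identity[OF d v'] pos by (simp add: field_simps)
    ultimately show ?thesis by simp
  qed
  have cont: "continuous_on (ball 0 \<delta>) L"
    by (rule DERIV_continuous_on[of _ _ "\<lambda>_. 0"]) (use D in \<open>auto intro: has_field_derivative_at_within\<close>)
  obtain C where C: "\<And>x. x \<in> ball 0 \<delta> \<Longrightarrow> L x = C"
    by (rule DERIV_zero_connected_constant[of "ball 0 \<delta>" "{}" L]) (use cont D in auto)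
  have "L u = L 0" using C[of u] C[of 0] u d by simp
  then show ?thesis unfolding L_def by simp
qed



lemma deriv_iter:
  fixes f :: "real \<Rightarrow> real" and F :: "nat \<Rightarrow> real \<Rightarrow> real"
  assumes U: "open U" and f: "\<And>x. x \<in> U \<Longrightarrow> f x = F 0 x"
    and D: "\<And>k x. x \<in> U \<Longrightarrow> (F k has_real_derivative F (Suc k) x) (at x)"
  shows "x \<in> U \<Longrightarrow> (deriv ^^ n) f x = F n x"
proof (induction n arbitrary: x)
  case 0 then show ?case using f by simp
next
  case (Suc n)
  have ev: "eventually (\<lambda>y. (deriv ^^ n) f y = F n y) (nhds x)"
    using eventually_nhds_in_open[OF U Suc.prems] by (rule eventually_mono) (rule Suc.IH)
  have "(deriv ^^ Suc n) f x = deriv ((deriv ^^ n) f) x" by simp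
  also have "\<dots> = deriv (F n) x" by (rule deriv_cong_ev[OF ev refl])
  also have "\<dots> = F (Suc n) x" by (rule DERIV_imp_deriv[OF D[OF Suc.prems]])
  finally show ?case .
qed

lemma deriv_iter_zero: "(deriv ^^ n) (\<lambda>u::real. 0::real) = (\<lambda>u. 0)"
proof (induction n)
  case (Suc n)
  have "deriv (\<lambda>u::real. 0::real) = (\<lambda>u. 0)"
    by (rule ext) (rule DERIV_imp_deriv, rule DERIV_const)
  then show ?case using Suc by simp
qed simp

lemma Good_pow: "Good \<delta> c \<Longrightarrow> Good \<delta> (\<lambda>j. of_int j ^ k * c j)"
proof (induction k)
  case 0 then show ?case by simp
next
  case (Suc k)
  have "Good \<delta> (\<lambda>j. of_int j * (of_int j ^ k * c j))" by (rule Good_mult[OF Suc.IH[OF Suc.prems]])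
  then show ?case by (simp add: mult.assoc)
qed

lemma pow_eq: "exp (- (\<delta>::real)) ^ nat (p\<^sup>2) = exp (- \<delta> * (of_int p)\<^sup>2)"
proof -
  have "real (nat (p\<^sup>2)) = (of_int p)\<^sup>2" by simp
  then show ?thesis using exp_of_nat_mult[of "nat (p\<^sup>2)" "- \<delta>"] by (simp add: mult.commute)
qed

lemma theta3_eq: "theta3 (exp (- \<delta>)) = Ec (th \<delta>) 0"
  unfolding theta3_def Ec_def th_def pow_eq by simp

lemma mgf_eq: "theta_mgf (exp (- \<delta>)) u = Ec (th \<delta>) u / Ec (th \<delta>) 0"
proof -
  have "theta_mgf (exp (- \<delta>)) u = (\<Sum>\<^sub>\<infinity>n. (1 / Ec (th \<delta>) 0) * (th \<delta> n * exp (of_int n * u)))"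
    unfolding theta_mgf_def theta_pmf_def theta3_eq pow_eq th_def by (simp add: mult.commute)
  also have "\<dots> = Ec (th \<delta>) u / Ec (th \<delta>) 0"
    unfolding Ec_def infsum_cmult_right' by simp
  finally show ?thesis .
qed

lemma cumulant_formula:
  assumes d: "\<delta> > 0"
  shows "theta_cumulant (exp (- \<delta>)) n = (\<Sum>\<^sub>\<infinity>j. of_int j ^ n * (ss \<delta> j / of_int j)) - (if n = 0 then Ec (\<lambda>j. ss \<delta> j / of_int j) 0 else 0)"
proof -
  define h where "h = (\<lambda>j. ss \<delta> j / of_int j)"
  define F where "F = (\<lambda>k u. Ec (\<lambda>j. of_int j ^ k * h j) u - (if k = 0 then Ec h 0 else 0))"
  have f: "ln (theta_mgf (exp (- \<delta>)) u) = F 0 u" if "u \<in> ball 0 \<delta>" for u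
  proof -
    have u: "\<bar>u\<bar> < \<delta>" using that by simp
    have p1: "Ec (th \<delta>) u > 0" by (rule Ec_th_pos[OF d u])
    have p0: "Ec (th \<delta>) 0 > 0" by (rule Ec_th_pos) (use d in auto)
    have "ln (theta_mgf (exp (- \<delta>)) u) = ln (Ec (th \<delta>) u) - ln (Ec (th \<delta>) 0)"
      unfolding mgf_eq using p1 p0 by (simp add: ln_div)
    also have "\<dots> = Ec h u - Ec h 0" unfolding h_def by (rule log_identity[OF d u])
    finally show ?thesis unfolding F_def by simp
  qed
  have D: "(F k has_real_derivative F (Suc k) x) (at x)" if "x \<in> ball 0 \<delta>" for k x
  proof -
    have x: "\<bar>x\<bar> < \<delta>" using that by simp
    have G: "Good \<delta> (\<lambda>j. of_int j ^ k * h j)" unfolding h_def by (rule Good_pow[OF Good_hh[OF d]])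
    have "(Ec (\<lambda>j. of_int j ^ k * h j) has_real_derivative Ec (\<lambda>j. of_int j * (of_int j ^ k * h j)) x) (at x)"
      by (rule Ec_deriv[OF G x])
    from DERIV_diff[OF this DERIV_const[of "if k = 0 then Ec h 0 else 0"]]
    show ?thesis unfolding F_def by (simp add: mult.assoc)
  qed
  have "theta_cumulant (exp (- \<delta>)) n = F n 0"
    unfolding theta_cumulant_def
    by (rule deriv_iter[of "ball 0 \<delta>"]) (use f D d in auto)
  then show ?thesis unfolding F_def Ec_def h_def by simp
qed

lemma odd_zero:
  "(\<Sum>\<^sub>\<infinity>j. of_int j ^ (2 * n + 1) * (ss \<delta> j / of_int j)) = 0"
proof -
  let ?g = "\<lambda>j. of_int j ^ (2 * n + 1) * (ss \<delta> j / of_int j) :: real"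
  have "infsum ?g UNIV = infsum (\<lambda>b. - ?g b) UNIV"
  proof (rule infsum_reindex_bij_witness[of UNIV uminus uminus])
    fix a :: int
    show "- ?g (- a) = ?g a" by (simp add: ss_minus)
  qed auto
  also have "\<dots> = - infsum ?g UNIV" by (rule infsum_uminus)
  finally show ?thesis by simp
qed

lemma ellK_nonneg:
  assumes "0 \<le> x" "x \<le> 1"
  shows "0 \<le> ellK x"
proof (cases "(\<lambda>t. 1 / (sqrt (1 - t\<^sup>2) * sqrt (1 - x\<^sup>2 * t\<^sup>2))) integrable_on {0..1}")
  case True
  show ?thesis unfolding ellK_def
  proof (rule integral_nonneg[OF True])
    fix t :: real assume t: "t \<in> {0..1}"
    have t2: "t\<^sup>2 \<le> 1" using t by (simp add: power_le_one)
    have x2: "x\<^sup>2 \<le> 1" using assms by (simp add: power_le_one)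
    have "x\<^sup>2 * t\<^sup>2 \<le> 1" using t2 x2 by (simp add: mult_le_one)
    then show "0 \<le> 1 / (sqrt (1 - t\<^sup>2) * sqrt (1 - x\<^sup>2 * t\<^sup>2))" using t2 by simp
  qed
next
  case False then show ?thesis unfolding ellK_def by (simp add: not_integrable_integral)
qed


lemma even_sum:
  assumes c: "c > 0" and n: "n \<ge> 1"
  shows "(\<Sum>\<^sub>\<infinity>j. of_int j ^ (2 * n) * (ss (pi * c) j / of_int j)) =
         (\<Sum>\<^sub>\<infinity>m\<in>{1::nat..}. (-1) ^ (m - 1) * real m ^ (2 * n - 1) / sinh (c * real m * pi))"
proof -
  define \<delta> where "\<delta> = pi * c"
  have d: "\<delta> > 0" using c by (simp add: \<delta>_def)
  define g where "g = (\<lambda>j. of_int j ^ (2 * n) * (ss \<delta> j / of_int j) :: real)"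
  have sg0: "(\<lambda>j. of_int j ^ (2 * n) * (ss \<delta> j / of_int j) * exp (of_int j * 0)) summable_on UNIV"
    by (rule Ec_summable[OF Good_pow[OF Good_hh[OF d]]]) (use d in simp)
  have sg: "g summable_on UNIV" using sg0 unfolding g_def by simp
  define P where "P = int ` {1..}"
  define M where "M = (\<lambda>k. - int k) ` {1..}"
  have g0: "g 0 = 0" by (simp add: g_def)
  have geven: "g (- j) = g j" for j by (simp add: g_def ss_minus)
  have cover: "x \<in> P \<union> M" if "x \<noteq> 0" for x
  proof (cases "x > 0")
    case True
    then have "x = int (nat x)" "nat x \<in> {1..}" by auto
    then show ?thesis unfolding P_def by blast
  next
    case False
    then have "x = - int (nat (- x))" "nat (- x) \<in> {1..}" using that by auto
    then show ?thesis unfolding M_def by blast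
  qed
  have disj: "P \<inter> M = {}" unfolding P_def M_def by auto
  have "infsum g UNIV = infsum g (P \<union> M)"
  proof (rule infsum_cong_neutral)
    fix x assume "x \<in> UNIV - (P \<union> M)"
    then have "x = 0" using cover by blast
    then show "g x = 0" using g0 by simp
  qed auto
  also have "\<dots> = infsum g P + infsum g M"
    by (rule infsum_Un_disjoint[OF summable_on_subset_banach[OF sg] summable_on_subset_banach[OF sg] disj]) auto
  also have "infsum g M = infsum (\<lambda>k. g (int k)) {1..}"
  proof -
    have "infsum g M = infsum (g \<circ> (\<lambda>k. - int k)) {1..}"
      unfolding M_def by (rule infsum_reindex) (auto simp: inj_on_def)
    then show ?thesis by (simp add: o_def geven)
  qed
  also have "infsum g P = infsum (\<lambda>k. g (int k)) {1..}"
  proof -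
    have "infsum g P = infsum (g \<circ> int) {1..}"
      unfolding P_def by (rule infsum_reindex) (auto simp: inj_on_def)
    then show ?thesis by (simp add: o_def)
  qed
  finally have L: "infsum g UNIV = 2 * infsum (\<lambda>k. g (int k)) {1..}" by simp
  have pt: "(-1) ^ (m - 1) * real m ^ (2 * n - 1) / sinh (c * real m * pi) = 2 * g (int m)"
    if m: "m \<in> {1..}" for m
  proof -
    have m1: "m \<ge> 1" using m by simp
    have e1: "real m ^ (2 * n) = real m ^ (2 * n - 1) * real m"
      using n by (metis Suc_diff_1 mult_pos_pos pos2 power_Suc2 zero_less_one less_le_trans)
    have e2: "(-1::real) ^ m = - ((-1) ^ (m - 1))"
      using m1 by (metis Suc_diff_1 le_less_trans less_numeral_extra(1) mult_minus1 power_Suc zero_less_one less_le_trans)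
    have sgm: "sg (int m) = (-1) ^ m" by (simp add: sg_def)
    have sh: "sinh (c * real m * pi) = sinh (\<delta> * real m)" by (simp add: \<delta>_def mult_ac)
    have mpos: "real m > 0" using m1 by simp
    have e1': "(of_int (int m) :: real) ^ (2 * n) = real m ^ (2 * n - 1) * real m" using e1 by simp
    have e3: "(of_int (int m) :: real) = real m" by simp
    have "2 * g (int m) = (-1) ^ (m - 1) * (real m ^ (2 * n - 1) * real m) / (real m * sinh (\<delta> * real m))"
      unfolding g_def ss_def sgm e2 e3 by (simp add: e1)
    also have "\<dots> = (-1) ^ (m - 1) * real m ^ (2 * n - 1) / sinh (\<delta> * real m)"
      using mpos by simp
    finally show ?thesis unfolding sh by simp
  qed
  have "(\<Sum>\<^sub>\<infinity>m\<in>{1::nat..}. (-1) ^ (m - 1) * real m ^ (2 * n - 1) / sinh (c * real m * pi)) =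
        (\<Sum>\<^sub>\<infinity>m\<in>{1::nat..}. 2 * g (int m))"
    by (rule infsum_cong) (rule pt)
  also have "\<dots> = 2 * infsum (\<lambda>k. g (int k)) {1..}" by (rule infsum_cmult_right')
  finally show ?thesis using L unfolding g_def \<delta>_def by simp
qed

theorem mainTheorem3:
  fixes k :: real
  assumes "0 < k" and "k < 1"
  defines "k' \<equiv> sqrt (1 - k\<^sup>2)"
  defines "c \<equiv> ellK k' / ellK k"
  defines "q \<equiv> exp (- pi * c)"
  shows "(\<forall>n::nat. theta_cumulant q (2 * n + 1) = 0) \<and>
         (\<forall>n::nat. n \<ge> 1 \<longrightarrow>
            theta_cumulant q (2 * n) =
              (\<Sum>\<^sub>\<infinity>m\<in>{1::nat..}. (-1) ^ (m - 1) * real m ^ (2 * n - 1) / sinh (c * real m * pi)))"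
proof -
  have k2: "k\<^sup>2 < 1"
    using mult_strict_mono[of k 1 k 1] assms(1,2) by (simp add: power2_eq_square)
  have kp: "0 \<le> k'" "k' \<le> 1" unfolding k'_def using k2 assms(1) by (auto simp: real_sqrt_le_1_iff)
  have c0: "c \<ge> 0" unfolding c_def
    using ellK_nonneg[OF kp] ellK_nonneg[of k] assms(1,2) by simp
  show ?thesis
  proof (cases "c = 0")
    case True
    have q1: "q = 1" unfolding q_def True by simp
    have t3: "theta3 1 = 0"
      unfolding theta3_def by (simp add: infsum_not_exists infsum_diverge_constant infinite_UNIV_int)
    have mgf: "(\<lambda>u. ln (theta_mgf 1 u)) = (\<lambda>u. 0)"
      by (rule ext) (simp add: theta_mgf_def theta_pmf_def t3)
    have cum: "theta_cumulant q m = 0" for m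
      unfolding theta_cumulant_def q1 mgf deriv_iter_zero by simp
    show ?thesis using cum True by simp
  next
    case False
    then have cpos: "c > 0" using c0 by simp
    define \<delta> where "\<delta> = pi * c"
    have d: "\<delta> > 0" using cpos by (simp add: \<delta>_def)
    have qd: "q = exp (- \<delta>)" unfolding q_def \<delta>_def by simp
    have odd: "theta_cumulant q (2 * n + 1) = 0" for n
      unfolding qd cumulant_formula[OF d] using odd_zero[of n \<delta>] by simp
    have even: "theta_cumulant q (2 * n) =
              (\<Sum>\<^sub>\<infinity>m\<in>{1::nat..}. (-1) ^ (m - 1) * real m ^ (2 * n - 1) / sinh (c * real m * pi))"
      if n: "n \<ge> 1" for n
      unfolding qd cumulant_formula[OF d] using even_sum[OF cpos n] n by (simp add: \<delta>_def)
    show ?thesis using odd even by blast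
  qed
qed

end
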